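(* Let $p\in\mathbb{Z}^d$ with $\gcd(p_1,\dots,p_d)=1$, let $n=\max_k|p_k|$, $m=\#\{k:|p_k|=n\}$, and $Q(\lambda)=\sum_{k=1}^d(\lambda^{p_k}+\lambda^{-p_k}-2)$. Then $Q(\lambda)=m\lambda^{-n}\prod_{k=1}^n(\lambda-\lambda_k)(\lambda-\lambda_k^{-1})$ for some $\lambda_1,\dots,\lambda_n\in\mathbb{C}$ satisfying $1=\lambda_1<|\lambda_2|\le\cdots\le|\lambda_n|$ and $\lambda_2,\dots,\lambda_n\notin[1,\infty)$. Moreover, for any such roots, $$H(p)^2=|p|^2\,m\prod_{k=2}^n(-\lambda_k).$$
   Context: Discrete Laplacian on $\mathbb{Z}^d$: $\Delta u(x)=\sum_{i=1}^d(u(x+e_i)+u(x-e_i)-2u(x))$. For $p\ne0$, $H(p)=\Delta u_p(0)$ where $u_p$ is the unique solution of $\Delta u=0$ on $\{p\cdot x>0\}$, $u=0$ on $\{p\cdot x\le0\}$, $\sup_{p\cdot x>0}|u(x)-p\cdot x|<\infty$. *)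

theory Defs
  imports "HOL-Analysis.Analysis"
begin

text \<open>Lattice points of Z^d are modelled as int^'d, 'd an arbitrary finite index type (d = CARD('d)).\<close>

definition ldot :: "int ^ 'd \<Rightarrow> int ^ 'd \<Rightarrow> int" where
  "ldot p x = (\<Sum>i\<in>UNIV. p $ i * x $ i)"

definition dlap :: "(int ^ 'd \<Rightarrow> real) \<Rightarrow> int ^ 'd \<Rightarrow> real" where
  "dlap u x = (\<Sum>i\<in>UNIV. u (x + axis i 1) + u (x - axis i 1) - 2 * u x)"

definition usol :: "int ^ 'd \<Rightarrow> (int ^ 'd \<Rightarrow> real)" where
  "usol p = (THE u. (\<forall>x. ldot p x > 0 \<longrightarrow> dlap u x = 0)
                 \<and> (\<forall>x. ldot p x \<le> 0 \<longrightarrow> u x = 0)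
                 \<and> (\<exists>C. \<forall>x. ldot p x > 0 \<longrightarrow> \<bar>u x - real_of_int (ldot p x)\<bar> \<le> C))"

definition Hfun :: "int ^ 'd \<Rightarrow> real" where
  "Hfun p = dlap (usol p) 0"

definition Qpoly :: "int ^ 'd \<Rightarrow> complex \<Rightarrow> complex" where
  "Qpoly p z = (\<Sum>k\<in>UNIV. z powi (p $ k) + z powi (- (p $ k)) - 2)"

end

theory Submission
  imports Defs "HOL-Computational_Algebra.Fundamental_Theorem_Algebra" "HOL-Analysis.FPS_Convergence"
begin

lemma liou1:
  fixes M :: "int \<Rightarrow> real" and q :: "'i::finite \<Rightarrow> int"
  assumes nz: "q i0 \<noteq> 0"
  and bnd: "\<And>s. M s \<le> B"
  and neg: "\<And>s. s \<le> 0 \<Longrightarrow> M s \<le> 0"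
  and sub: "\<And>s. s > 0 \<Longrightarrow> 2 * real CARD('i) * M s \<le> (\<Sum>i\<in>UNIV. M (s + q i) + M (s - q i))"
  shows "M s \<le> 0"
proof (rule ccontr)
  assume "\<not> M s \<le> 0"
  hence Ms: "M s > 0" by simp
  have s0: "s > 0" using Ms neg[of s] by (cases "s \<le> 0") auto
  have B0: "B > 0" using Ms bnd[of s] by linarith
  define n0 where "n0 = Max (range (\<lambda>i. \<bar>q i\<bar>))"
  have qle: "\<bar>q i\<bar> \<le> n0" for i unfolding n0_def by (rule Max_ge) auto
  have n0pos: "n0 > 0" using qle[of i0] nz by linarith
  obtain N :: int where N: "real_of_int N > max (real_of_int s) (B * (s + n0) / M s)"
    by (meson ex_less_of_int)
  have Ns: "N > s" using N by linarith
  have Npos: "real_of_int (N + n0) > 0" using Ns s0 n0pos by linarith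
  define c where "c = B / (N + n0)"
  have c0: "c > 0" unfolding c_def using B0 Npos by simp
  have cN: "c * (N + n0) = B" unfolding c_def using Npos by simp
  define z where "z t = M t - c * (t + n0)" for t :: int
  define T where "T = {-n0..N+n0}"
  have finT: "finite T" unfolding T_def by simp
  have sT: "s \<in> T" unfolding T_def using s0 Ns n0pos by auto
  define zmax where "zmax = Max (z ` T)"
  have zle: "t \<in> T \<Longrightarrow> z t \<le> zmax" for t unfolding zmax_def using finT by auto
  have zs: "z s > 0"
  proof -
    have "B * (s + n0) / M s < N" using N by linarith
    hence "B * (s + n0) < N * M s" using Ms by (simp add: divide_less_eq)
    hence "B * (s + n0) < (N + n0) * M s" using n0pos Ms
      by (smt (verit, ccfv_SIG) mult_right_mono of_int_add of_int_0_less_iff)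
    hence "B * (s + n0) / (N + n0) < M s" using Npos by (simp add: divide_less_eq mult.commute)
    thus ?thesis unfolding z_def c_def by simp
  qed
  have zmpos: "zmax > 0" using zle[OF sT] zs by linarith
  define A where "A = {t\<in>T. z t = zmax}"
  have finA: "finite A" unfolding A_def using finT by simp
  have Ane: "A \<noteq> {}"
  proof -
    have "zmax \<in> z ` T" unfolding zmax_def using finT sT by (intro Max_in) auto
    thus ?thesis unfolding A_def by auto
  qed
  define s1 where "s1 = Min A"
  have s1A: "s1 \<in> A" unfolding s1_def using finA Ane by (rule Min_in)
  have s1min: "t \<in> A \<Longrightarrow> s1 \<le> t" for t unfolding s1_def using finA by simp
  have s1T: "s1 \<in> T" and zs1: "z s1 = zmax" using s1A unfolding A_def by auto
  have s1pos: "s1 > 0"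
  proof (rule ccontr)
    assume "\<not> s1 > 0"
    hence "M s1 \<le> 0" using neg by simp
    moreover have "c * (s1 + n0) \<ge> 0" using s1T c0 unfolding T_def
      by (intro mult_nonneg_nonneg) auto
    ultimately have "z s1 \<le> 0" unfolding z_def by linarith
    thus False using zs1 zmpos by linarith
  qed
  have s1N: "s1 < N"
  proof (rule ccontr)
    assume "\<not> s1 < N"
    hence "real_of_int (s1 + n0) \<ge> real_of_int (N + n0)" by simp
    hence "c * (s1 + n0) \<ge> B" using c0 cN
      by (metis mult_left_mono order_less_imp_le)
    hence "z s1 \<le> 0" unfolding z_def using bnd[of s1] by linarith
    thus False using zs1 zmpos by linarith
  qed
  have nbT: "s1 + q i \<in> T" "s1 - q i \<in> T" for i
    using qle[of i] s1pos s1N unfolding T_def by auto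
  have lin: "(\<Sum>i\<in>UNIV. c * (s1 + q i + n0) + c * (s1 - q i + n0))
      = 2 * real CARD('i) * (c * (s1 + n0))"
  proof -
    have "(\<Sum>i\<in>UNIV. c * (s1 + q i + n0) + c * (s1 - q i + n0))
        = (\<Sum>i\<in>(UNIV::'i set). 2 * (c * (s1 + n0)))"
      by (intro sum.cong refl) (simp add: algebra_simps)
    thus ?thesis by simp
  qed
  have "2 * real CARD('i) * z s1 \<le> (\<Sum>i\<in>UNIV. z (s1 + q i) + z (s1 - q i))"
  proof -
    have "(\<Sum>i\<in>UNIV. z (s1 + q i) + z (s1 - q i)) = (\<Sum>i\<in>UNIV. M (s1 + q i) + M (s1 - q i))
      - (\<Sum>i\<in>UNIV. c * (s1 + q i + n0) + c * (s1 - q i + n0))"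
      unfolding z_def sum_subtractf[symmetric] by (intro sum.cong refl) (simp add: algebra_simps)
    thus ?thesis using sub[OF s1pos] lin unfolding z_def by (simp add: algebra_simps)
  qed
  hence "(\<Sum>i\<in>UNIV. (zmax - z (s1 + q i)) + (zmax - z (s1 - q i))) \<le> 0"
    using zs1 by (simp add: sum.distrib sum_subtractf sum_negf)
  moreover have "\<forall>i\<in>UNIV. 0 \<le> (zmax - z (s1 + q i)) + (zmax - z (s1 - q i))"
    using zle nbT by (smt (verit))
  ultimately have "\<forall>i\<in>UNIV. (zmax - z (s1 + q i)) + (zmax - z (s1 - q i)) = 0"
    using sum_nonneg_eq_0_iff[of "UNIV::'i set"]
    by (smt (verit, best) finite sum_nonneg)
  hence e0: "zmax - z (s1 + q i0) + (zmax - z (s1 - q i0)) = 0" by blast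
  have e: "z (s1 + q i0) = zmax" "z (s1 - q i0) = zmax"
    using e0 zle[OF nbT(1)[of i0]] zle[OF nbT(2)[of i0]] by linarith+
  have "s1 - \<bar>q i0\<bar> \<in> A" unfolding A_def using e nbT[of i0]
    by (cases "q i0 \<ge> 0") auto
  from s1min[OF this] nz show False by simp
qed

lemma ldot_add: "ldot p (x + y) = ldot p x + ldot p y"
  unfolding ldot_def by (simp add: algebra_simps sum.distrib)
lemma ldot_diff: "ldot p (x - y) = ldot p x - ldot p y"
  unfolding ldot_def by (simp add: algebra_simps sum_subtractf)
lemma ldot_zero: "ldot p 0 = 0"
  unfolding ldot_def by simp
lemma ldot_ax: "ldot p (axis i 1) = p $ i"
proof -
  have "ldot p (axis i 1) = (\<Sum>j\<in>UNIV. if j = i then p $ i else 0)"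
    unfolding ldot_def by (intro sum.cong refl) (auto simp: axis_def)
  thus ?thesis by simp
qed
lemma ldot_axis:
  "ldot p (x + axis i 1) = ldot p x + p $ i" "ldot p (x - axis i 1) = ldot p x - p $ i"
  "ldot p (axis i 1) = p $ i" "ldot p 0 = 0" "ldot p (0 - axis i 1) = - p $ i"
  using ldot_diff[of p 0 "axis i 1"] by (simp_all add: ldot_add ldot_diff ldot_zero ldot_ax)

lemma half_le:
  fixes p :: "int ^ 'd" and w :: "int ^ 'd \<Rightarrow> real"
  assumes nz: "p $ i0 \<noteq> 0"
  and bnd: "\<And>x. \<bar>w x\<bar> \<le> B"
  and zero: "\<And>x. ldot p x \<le> 0 \<Longrightarrow> w x = 0"
  and harm: "\<And>x. ldot p x > 0 \<Longrightarrow> 2 * real CARD('d) * w x = (\<Sum>i\<in>UNIV. w (x + axis i 1) + w (x - axis i 1))"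
  shows "w x \<le> 0"
proof -
  define M where "M s = Sup (insert 0 {w x | x. ldot p x = s})" for s
  have bdd: "bdd_above (insert 0 {w x | x. ldot p x = s})" for s
  proof (rule bdd_aboveI[of _ B])
    fix y assume "y \<in> insert 0 {w x | x. ldot p x = s}"
    moreover have "0 \<le> B" using bnd[of 0] by linarith
    ultimately show "y \<le> B" using bnd by (auto dest: abs_le_D1)
  qed
  have wM: "w x \<le> M (ldot p x)" for x
    unfolding M_def by (rule cSup_upper[OF _ bdd]) auto
  have M0: "0 \<le> M s" for s
    unfolding M_def by (rule cSup_upper[OF _ bdd]) auto
  have MB: "M s \<le> B" for s
    unfolding M_def
  proof (rule cSup_least)
    fix y assume "y \<in> insert 0 {w x | x. ldot p x = s}"
    moreover have "0 \<le> B" using bnd[of 0] by linarith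
    ultimately show "y \<le> B" using bnd by (auto dest: abs_le_D1)
  qed auto
  have Mneg: "M s \<le> 0" if "s \<le> 0" for s
    unfolding M_def using zero that by (intro cSup_least) auto
  have Msub: "2 * real CARD('d) * M s \<le> (\<Sum>i\<in>UNIV. M (s + p $ i) + M (s - p $ i))" if s: "s > 0" for s
  proof -
    define R where "R = (\<Sum>i\<in>UNIV. M (s + p $ i) + M (s - p $ i))"
    have cpos: "2 * real CARD('d) > 0" by simp
    have R0: "R \<ge> 0" unfolding R_def using M0 by (intro sum_nonneg) (simp add: add_nonneg_nonneg)
    have "M s \<le> R / (2 * real CARD('d))"
      unfolding M_def
    proof (rule cSup_least)
      fix y assume "y \<in> insert 0 {w x | x. ldot p x = s}"
      then consider "y = 0" | x where "y = w x" "ldot p x = s" by blast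
      thus "y \<le> R / (2 * real CARD('d))"
      proof cases
        case 1 thus ?thesis using R0 cpos by simp
      next
        case 2
        have "2 * real CARD('d) * w x = (\<Sum>i\<in>UNIV. w (x + axis i 1) + w (x - axis i 1))"
          using harm 2 s by simp
        also have "\<dots> \<le> R" unfolding R_def
          by (intro sum_mono add_mono) (metis wM ldot_axis(1) 2(2), metis wM ldot_axis(2) 2(2))
        finally show ?thesis using 2 cpos by (simp add: le_divide_eq mult.commute)
      qed
    qed auto
    thus ?thesis using cpos unfolding R_def by (simp add: le_divide_eq mult.commute)
  qed
  have "M (ldot p x) \<le> 0"
    by (rule liou1[of "\<lambda>i. p $ i" i0 M B]) (use nz MB Mneg Msub in auto)
  thus ?thesis using wM[of x] by simp
qed

definition Psol :: "int ^ 'd \<Rightarrow> (int ^ 'd \<Rightarrow> real) \<Rightarrow> bool" where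
  "Psol p u \<longleftrightarrow> (\<forall>x. ldot p x > 0 \<longrightarrow> dlap u x = 0)
                 \<and> (\<forall>x. ldot p x \<le> 0 \<longrightarrow> u x = 0)
                 \<and> (\<exists>C. \<forall>x. ldot p x > 0 \<longrightarrow> \<bar>u x - real_of_int (ldot p x)\<bar> \<le> C)"

lemma dlap_alt: "dlap f x = (\<Sum>i\<in>UNIV. f (x + axis i 1) + f (x - axis i 1)) - 2 * real CARD('d) * f (x :: int ^ 'd)"
  unfolding dlap_def by (simp add: sum_subtractf)

lemma usol_eq:
  fixes p :: "int ^ 'd"
  assumes nz: "p $ i0 \<noteq> 0" and u: "Psol p u"
  shows "usol p = u"
proof -
  have uniq: "v = u" if v: "Psol p v" for v
  proof -
    from u obtain C1 where C1: "\<And>x. ldot p x > 0 \<Longrightarrow> \<bar>u x - real_of_int (ldot p x)\<bar> \<le> C1"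
      unfolding Psol_def by blast
    from v obtain C2 where C2: "\<And>x. ldot p x > 0 \<Longrightarrow> \<bar>v x - real_of_int (ldot p x)\<bar> \<le> C2"
      unfolding Psol_def by blast
    define B where "B = \<bar>C1\<bar> + \<bar>C2\<bar>"
    have key: "w x \<le> 0" if w: "w = (\<lambda>x. a x - b x)" and a: "Psol p a" and b: "Psol p b"
       and ca: "\<And>x. ldot p x > 0 \<Longrightarrow> \<bar>a x - real_of_int (ldot p x)\<bar> \<le> Ca"
       and cb: "\<And>x. ldot p x > 0 \<Longrightarrow> \<bar>b x - real_of_int (ldot p x)\<bar> \<le> Cb"
     for w a b Ca Cb x
    proof (rule half_le[OF nz])
      show "\<bar>w x\<bar> \<le> \<bar>Ca\<bar> + \<bar>Cb\<bar>" for x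
      proof (cases "ldot p x > 0")
        case True thus ?thesis using ca[OF True] cb[OF True] unfolding w by linarith
      next
        case False thus ?thesis using a b unfolding w Psol_def by auto
      qed
      show "w x = 0" if "ldot p x \<le> 0" for x using a b that unfolding w Psol_def by auto
      show "2 * real CARD('d) * w x = (\<Sum>i\<in>UNIV. w (x + axis i 1) + w (x - axis i 1))"
        if "ldot p x > 0" for x
      proof -
        have "dlap a x = 0" "dlap b x = 0" using a b that unfolding Psol_def by auto
        hence "dlap a x - dlap b x = 0" by simp
        thus ?thesis unfolding dlap_alt w by (simp add: sum_subtractf algebra_simps)
      qed
    qed
    show "v = u"
    proof
      fix x
      have "(\<lambda>x. v x - u x) x \<le> 0" by (rule key[OF refl v u C2 C1])
      moreover have "(\<lambda>x. u x - v x) x \<le> 0" by (rule key[OF refl u v C1 C2])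
      ultimately show "v x = u x" by simp
    qed
  qed
  have "usol p = (THE u. Psol p u)" unfolding usol_def Psol_def by (rule refl)
  also have "\<dots> = u" by (rule the_equality[of "Psol p", OF u uniq])
  finally show ?thesis .
qed

definition Pp :: "int ^ 'd \<Rightarrow> nat \<Rightarrow> complex poly" where
  "Pp p n = (\<Sum>k\<in>UNIV. monom 1 (n + nat \<bar>p $ k\<bar>) + monom 1 (n - nat \<bar>p $ k\<bar>) - monom 2 n)"

definition Gs :: "nat \<Rightarrow> complex poly" where
  "Gs a = (\<Sum>i<a. monom 1 i)"

definition Rp :: "int ^ 'd \<Rightarrow> nat \<Rightarrow> complex poly" where
  "Rp p n = (\<Sum>k\<in>UNIV. monom 1 (n - nat \<bar>p $ k\<bar>) * (Gs (nat \<bar>p $ k\<bar>))^2)"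

lemma poly_Gs: "poly (Gs a) z = (\<Sum>i<a. z ^ i)"
  unfolding Gs_def by (simp add: poly_sum poly_monom)

lemma term_id:
  fixes z :: complex
  assumes "a \<le> n"
  shows "z ^ (n + a) + z ^ (n - a) - 2 * z ^ n = (z - 1)^2 * (z ^ (n - a) * (\<Sum>i<a. z ^ i)^2)"
proof -
  have e: "(z - 1) * (\<Sum>i<a. z ^ i) = z ^ a - 1" using power_diff_1_eq[of z a] by simp
  have "(z - 1)^2 * (z ^ (n - a) * (\<Sum>i<a. z ^ i)^2) = z ^ (n - a) * ((z - 1) * (\<Sum>i<a. z ^ i))^2"
    by (simp add: power2_eq_square algebra_simps)
  also have "\<dots> = z ^ (n - a) * (z ^ a - 1)^2" by (simp add: e)
  also have "\<dots> = z ^ (n - a + a + a) + z ^ (n - a) - 2 * z ^ (n - a + a)"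
    by (simp add: power2_eq_square algebra_simps power_add)
  finally have "(z - 1)^2 * (z ^ (n - a) * (\<Sum>i<a. z ^ i)^2) = z ^ (n - a + a + a) + z ^ (n - a) - 2 * z ^ (n - a + a)" .
  moreover have "n - a + a + a = n + a" "n - a + a = n" using assms by auto
  ultimately show ?thesis by simp
qed

lemma Pp_Rp:
  assumes "\<forall>k. \<bar>p $ k\<bar> \<le> int n"
  shows "Pp p n = [:-1, 1:]^2 * Rp p n"
proof (rule poly_ext)
  fix z :: complex
  have "poly (Pp p n) z = (\<Sum>k\<in>UNIV. z ^ (n + nat \<bar>p $ k\<bar>) + z ^ (n - nat \<bar>p $ k\<bar>) - 2 * z ^ n)"
    unfolding Pp_def by (simp add: poly_sum poly_monom)
  also have "\<dots> = (\<Sum>k\<in>UNIV. (z - 1)^2 * (z ^ (n - nat \<bar>p $ k\<bar>) * (\<Sum>i<nat \<bar>p $ k\<bar>. z ^ i)^2))"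
    using assms by (intro sum.cong refl term_id) (simp add: nat_le_iff)
  also have "\<dots> = poly ([:-1, 1:]^2 * Rp p n) z"
    unfolding Rp_def by (simp add: poly_sum poly_monom poly_Gs sum_distrib_left)
  finally show "poly (Pp p n) z = poly ([:-1, 1:]^2 * Rp p n) z" .
qed

lemma Qpoly_Pp:
  fixes p :: "int ^ 'd"
  assumes "\<forall>k. \<bar>p $ k\<bar> \<le> int n" and z: "z \<noteq> 0"
  shows "Qpoly p z = z powi (- int n) * poly (Pp p n) z"
proof -
  have t: "z powi b + z powi (- b) - 2 = z powi (- int n) * (z ^ (n + nat \<bar>b\<bar>) + z ^ (n - nat \<bar>b\<bar>) - 2 * z ^ n)"
    if "\<bar>b\<bar> \<le> int n" for b
  proof -
    have A: "z powi (- int n) * z ^ k = z powi (int k - int n)" for k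
    proof -
      have "z powi (int k - int n) = z powi (int k) * z powi (- int n)"
        using z by (subst power_int_add[symmetric]) auto
      thus ?thesis by (simp add: power_int_of_nat)
    qed
    have B: "z powi b + z powi (- b) = z powi \<bar>b\<bar> + z powi (- \<bar>b\<bar>)"
      by (cases "b \<ge> 0") auto
    have C: "int (n + nat \<bar>b\<bar>) - int n = \<bar>b\<bar>" "int (n - nat \<bar>b\<bar>) - int n = - \<bar>b\<bar>"
      using that by auto
    have "z powi (- int n) * (z ^ (n + nat \<bar>b\<bar>) + z ^ (n - nat \<bar>b\<bar>) - 2 * z ^ n)
        = z powi (- int n) * z ^ (n + nat \<bar>b\<bar>) + z powi (- int n) * z ^ (n - nat \<bar>b\<bar>) - 2 * (z powi (- int n) * z ^ n)"
      by (simp add: algebra_simps)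
    also have "\<dots> = z powi \<bar>b\<bar> + z powi (- \<bar>b\<bar>) - 2"
      unfolding A C by simp
    finally show ?thesis using B by simp
  qed
  have "Qpoly p z = (\<Sum>k\<in>UNIV. z powi (- int n) * (z ^ (n + nat \<bar>p $ k\<bar>) + z ^ (n - nat \<bar>p $ k\<bar>) - 2 * z ^ n))"
    unfolding Qpoly_def using assms(1) by (intro sum.cong refl t) auto
  also have "\<dots> = z powi (- int n) * poly (Pp p n) z"
    unfolding Pp_def by (simp add: poly_sum poly_monom sum_distrib_left)
  finally show ?thesis .
qed

lemma Rp_at1: "poly (Rp p n) 1 = of_int (\<Sum>k\<in>UNIV. (p $ k)^2)"
proof -
  have "poly (Rp p n) 1 = (\<Sum>k\<in>UNIV. (of_nat (nat \<bar>p $ k\<bar>))^2 :: complex)"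
    unfolding Rp_def by (simp add: poly_sum poly_monom poly_Gs)
  also have "\<dots> = of_int (\<Sum>k\<in>UNIV. (p $ k)^2)"
    unfolding of_int_sum by (intro sum.cong refl) (simp add: of_nat_nat flip: of_int_power)
  finally show ?thesis .
qed

definition geom :: "complex \<Rightarrow> complex fps" where
  "geom c = Abs_fps (\<lambda>j. c ^ j)"

lemma geom_inv: "(1 - fps_const c * fps_X) * geom c = 1"
proof (rule fps_ext)
  fix j
  show "fps_nth ((1 - fps_const c * fps_X) * geom c) j = fps_nth 1 j"
  proof (cases j)
    case 0 thus ?thesis by (simp add: geom_def algebra_simps)
  next
    case (Suc i)
    have "(1 - fps_const c * fps_X) * geom c = geom c - fps_const c * (fps_X * geom c)"
      by (simp add: algebra_simps)
    thus ?thesis using Suc by (simp add: geom_def fps_X_mult_nth)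
  qed
qed

lemma geom_radius:
  assumes "r > 0" "r * cmod c < 1"
  shows "ereal r \<le> fps_conv_radius (geom c)"
proof -
  have "summable (\<lambda>j. fps_nth (geom c) j * (of_real r) ^ j)"
  proof -
    have "(\<lambda>j. fps_nth (geom c) j * (of_real r) ^ j) = (\<lambda>j. (c * of_real r) ^ j)"
      by (simp add: geom_def power_mult_distrib)
    moreover have "norm (c * of_real r) < 1" using assms by (simp add: norm_mult mult.commute)
    ultimately show ?thesis by (simp add: summable_geometric)
  qed
  from conv_radius_geI[OF this] assms show ?thesis by (simp add: fps_conv_radius_def)
qed

lemma prod_radius:
  assumes "finite K" "\<And>k. k \<in> K \<Longrightarrow> ereal r \<le> fps_conv_radius (f k :: complex fps)"
  shows "ereal r \<le> fps_conv_radius (\<Prod>k\<in>K. f k)"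
  using assms
proof (induction K rule: finite_induct)
  case empty thus ?case by simp
next
  case (insert k K)
  have "ereal r \<le> min (fps_conv_radius (f k)) (fps_conv_radius (\<Prod>k\<in>K. f k))"
    using insert by simp
  also have "\<dots> \<le> fps_conv_radius (f k * (\<Prod>k\<in>K. f k))" by (rule fps_conv_radius_mult)
  finally show ?case using insert by simp
qed

lemma K0_props:
  fixes mu :: "nat \<Rightarrow> complex"
  assumes fin: "finite K" and mu: "\<And>k. k \<in> K \<Longrightarrow> cmod (mu k) < 1"
  defines "K0 \<equiv> \<Prod>k\<in>K. geom (mu k)"
  shows "summable (\<lambda>j. cmod (fps_nth K0 j))"
    and "summable (\<lambda>j. of_nat j * cmod (fps_nth K0 j))"
    and "(\<lambda>j. fps_nth K0 j) sums eval_fps K0 1"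
    and "eval_fps K0 1 * (\<Prod>k\<in>K. 1 - mu k) = 1"
proof -
  define \<rho> where "\<rho> = Max (insert 0 ((\<lambda>k. cmod (mu k)) ` K))"
  have \<rho>ge: "cmod (mu k) \<le> \<rho>" if "k \<in> K" for k unfolding \<rho>_def using fin that by auto
  have \<rho>0: "0 \<le> \<rho>" unfolding \<rho>_def using fin by auto
  have \<rho>1: "\<rho> < 1"
  proof -
    have "\<rho> \<in> insert 0 ((\<lambda>k. cmod (mu k)) ` K)" unfolding \<rho>_def using fin by (intro Max_in) auto
    thus ?thesis using mu by auto
  qed
  define r where "r = 2 / (1 + \<rho>)"
  have r1: "r > 1" unfolding r_def using \<rho>0 \<rho>1 by (simp add: field_simps)
  have rmu: "r * cmod (mu k) < 1" if "k \<in> K" for k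
  proof -
    have "r * cmod (mu k) \<le> r * \<rho>" using \<rho>ge[OF that] r1 by (intro mult_left_mono) auto
    also have "r * \<rho> < 1" unfolding r_def using \<rho>0 \<rho>1 by (simp add: field_simps)
    finally show ?thesis .
  qed
  have rad: "ereal r \<le> fps_conv_radius K0"
    unfolding K0_def using fin by (intro prod_radius geom_radius) (use r1 rmu in auto)
  have e1: "ereal 1 < ereal r" using r1 by simp
  have rad1: "ereal (norm (1::complex)) < fps_conv_radius K0"
    using order_less_le_trans[OF e1 rad] by simp
  show "summable (\<lambda>j. cmod (fps_nth K0 j))"
    using norm_summable_fps[OF rad1] by simp
  show "(\<lambda>j. fps_nth K0 j) sums eval_fps K0 1"
    using sums_eval_fps[OF rad1] by simp
  have "ereal (norm (1::complex)) < fps_conv_radius (fps_deriv K0)"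
    using rad1 fps_conv_radius_deriv[of K0] by (meson order_less_le_trans)
  have "summable (\<lambda>j. of_nat (Suc j) * cmod (fps_nth K0 (Suc j)))"
  proof -
    have cn: "cmod (1 + complex_of_nat n) = 1 + real n" for n
      by (metis norm_of_nat of_nat_Suc)
    show ?thesis using norm_summable_fps[OF \<open>ereal (norm (1::complex)) < fps_conv_radius (fps_deriv K0)\<close>]
      by (simp add: fps_deriv_nth norm_mult cn)
  qed
  thus "summable (\<lambda>j. of_nat j * cmod (fps_nth K0 j))"
    by (subst summable_Suc_iff[symmetric]) simp
  define Pl where "Pl = (\<Prod>k\<in>K. [:1, - mu k:])"
  have PlK: "K0 * fps_of_poly Pl = 1"
  proof -
    have "fps_of_poly Pl = (\<Prod>k\<in>K. 1 - fps_const (mu k) * fps_X)"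
      unfolding Pl_def fps_of_poly_prod by (intro prod.cong refl) (simp add: fps_of_poly_linear' fps_const_neg)
    hence "K0 * fps_of_poly Pl = (\<Prod>k\<in>K. (1 - fps_const (mu k) * fps_X) * geom (mu k))"
      unfolding K0_def by (simp add: prod.distrib mult.commute)
    also have "\<dots> = 1" by (simp add: geom_inv)
    finally show ?thesis .
  qed
  have "eval_fps (K0 * fps_of_poly Pl) 1 = eval_fps K0 1 * eval_fps (fps_of_poly Pl) 1"
    by (rule eval_fps_mult) (use rad1 in auto)
  also have "eval_fps (fps_of_poly Pl) 1 = (\<Prod>k\<in>K. 1 - mu k)"
    unfolding Pl_def by (simp add: poly_prod)
  finally show "eval_fps K0 1 * (\<Prod>k\<in>K. 1 - mu k) = 1" using PlK by simp
qed

lemma G_inv: "(1 - fps_X)^2 * Abs_fps (\<lambda>j. of_nat (Suc j) :: complex) = 1"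
proof -
  have "(1 - fps_X) * Abs_fps (\<lambda>j. of_nat (Suc j) :: complex) = geom 1"
  proof (rule fps_ext)
    fix j
    show "fps_nth ((1 - fps_X) * Abs_fps (\<lambda>j. of_nat (Suc j) :: complex)) j = fps_nth (geom 1) j"
      by (cases j) (simp_all add: geom_def algebra_simps fps_X_mult_nth)
  qed
  hence "(1 - fps_X)^2 * Abs_fps (\<lambda>j. of_nat (Suc j) :: complex) = (1 - fps_const 1 * fps_X) * geom 1"
    by (simp add: power2_eq_square mult.assoc)
  thus ?thesis by (simp only: geom_inv)
qed

lemma bound_lemma:
  fixes h :: "nat \<Rightarrow> complex"
  assumes s1: "summable (\<lambda>j. cmod (h j))" and s2: "summable (\<lambda>j. of_nat j * cmod (h j))"
    and hS: "h sums S"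
  shows "cmod ((\<Sum>j<t. of_nat (t - j) * h j) - of_nat t * S) \<le> (\<Sum>j. of_nat j * cmod (h j))"
proof -
  define a where "a j = of_nat j * cmod (h j)" for j
  have sumh: "summable h" using hS by (simp add: sums_iff)
  have S: "S = (\<Sum>j. h (j + t)) + (\<Sum>j<t. h j)"
    using suminf_split_initial_segment[OF sumh, of t] hS by (simp add: sums_iff)
  have st: "summable (\<lambda>j. cmod (h (j + t)))" using s1 by (rule summable_ignore_initial_segment)
  have st2: "summable (\<lambda>j. a (j + t))" using s2 unfolding a_def by (rule summable_ignore_initial_segment)
  have "(\<Sum>j<t. of_nat (t - j) * h j) - of_nat t * S
      = - (\<Sum>j<t. of_nat j * h j) - of_nat t * (\<Sum>j. h (j + t))"
  proof -
    have "(\<Sum>j<t. of_nat (t - j) * h j) = (\<Sum>j<t. of_nat t * h j - of_nat j * h j)"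
      by (intro sum.cong refl) (simp add: of_nat_diff algebra_simps)
    thus ?thesis unfolding S by (simp add: sum_subtractf sum_distrib_left algebra_simps)
  qed
  hence "cmod ((\<Sum>j<t. of_nat (t - j) * h j) - of_nat t * S)
      \<le> cmod (\<Sum>j<t. of_nat j * h j) + cmod (of_nat t * (\<Sum>j. h (j + t)))"
    using norm_triangle_ineq4[of "- (\<Sum>j<t. of_nat j * h j)" "of_nat t * (\<Sum>j. h (j + t))"] by simp
  also have "cmod (\<Sum>j<t. of_nat j * h j) \<le> (\<Sum>j<t. a j)"
    unfolding a_def by (rule order_trans[OF norm_sum]) (simp add: norm_mult)
  also have "cmod (of_nat t * (\<Sum>j. h (j + t))) \<le> (\<Sum>j. a (j + t))"
  proof -
    have "cmod (of_nat t * (\<Sum>j. h (j + t))) = of_nat t * cmod (\<Sum>j. h (j + t))"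
      by (simp add: norm_mult)
    also have "\<dots> \<le> of_nat t * (\<Sum>j. cmod (h (j + t)))"
      by (intro mult_left_mono summable_norm st) auto
    also have "\<dots> = (\<Sum>j. of_nat t * cmod (h (j + t)))"
      using st by (simp add: suminf_mult)
    also have "\<dots> \<le> (\<Sum>j. a (j + t))"
      using st st2 unfolding a_def by (intro suminf_le summable_mult) (auto intro!: mult_right_mono)
    finally show ?thesis .
  qed
  also have "(\<Sum>j<t. a j) + (\<Sum>j. a (j + t)) = (\<Sum>j. a j)"
    using suminf_split_initial_segment[OF s2[folded a_def], of t] by simp
  finally show ?thesis unfolding a_def by simp
qed

lemma fps_const_prod_eq: "(\<Prod>k\<in>K. fps_const (f k)) = fps_const (\<Prod>k\<in>K. f k)"
  by (induction K rule: infinite_finite_induct) simp_all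

lemma fps_construction:
  fixes lam :: "nat \<Rightarrow> complex"
  assumes fin: "finite K" and big: "\<And>k. k \<in> K \<Longrightarrow> 1 < cmod (lam k)"
  shows "\<exists>F. fps_nth F 0 = 0 \<and> (\<exists>C. \<forall>t. cmod (fps_nth F t - of_nat t) \<le> C) \<and>
     fps_of_poly ([:-1,1:]^2 * (\<Prod>k\<in>K. [:-lam k,1:] * [:-inverse (lam k),1:])) * F
       = fps_const (\<Prod>k\<in>K. 1 - lam k) * fps_X * fps_of_poly (\<Prod>k\<in>K. [:-inverse (lam k),1:])"
proof -
  define mu where "mu k = inverse (lam k)" for k
  have lam0: "lam k \<noteq> 0" if "k \<in> K" for k using big[OF that] by auto
  have mu1: "cmod (mu k) < 1" if "k \<in> K" for k
    using big[OF that] unfolding mu_def by (simp add: norm_inverse inverse_less_1_iff)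
  define K0 where "K0 = (\<Prod>k\<in>K. geom (mu k))"
  define h where "h j = fps_nth K0 j" for j
  define S where "S = eval_fps K0 1"
  define cc where "cc = (\<Prod>k\<in>K. 1 - mu k)"
  note KP = K0_props[of K mu, OF fin mu1, folded K0_def]
  have s1: "summable (\<lambda>j. cmod (h j))" and s2: "summable (\<lambda>j. of_nat j * cmod (h j))"
    and hS: "h sums S" and Scc: "S * cc = 1"
    using KP unfolding h_def S_def cc_def by auto
  define G where "G = Abs_fps (\<lambda>j. of_nat (Suc j) :: complex)"
  define F where "F = fps_X * (fps_const cc * (G * K0))"
  have F0: "fps_nth F 0 = 0" unfolding F_def by (simp add: fps_X_mult_nth)
  have Fnth: "fps_nth F t = cc * (\<Sum>j<t. of_nat (t - j) * h j)" for t
  proof (cases t)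
    case 0 thus ?thesis by (simp add: F0)
  next
    case (Suc i)
    have "fps_nth F t = fps_nth (fps_const cc * (G * K0)) i"
      unfolding F_def Suc by (simp only: fps_X_mult_nth) simp
    also have "\<dots> = cc * fps_nth (G * K0) i" by simp
    also have "fps_nth (G * K0) i = (\<Sum>l=0..i. of_nat (Suc l) * h (i - l))"
      unfolding fps_mult_nth G_def h_def by simp
    finally have "fps_nth F t = cc * (\<Sum>l=0..i. of_nat (Suc l) * h (i - l))" .
    also have "(\<Sum>l=0..i. of_nat (Suc l) * h (i - l)) = (\<Sum>l<Suc i. of_nat (Suc i - (Suc i - Suc l)) * h (Suc i - Suc l))"
      by (intro sum.cong) (auto simp: atLeast0AtMost lessThan_Suc_atMost)
    also have "\<dots> = (\<Sum>j<Suc i. of_nat (Suc i - j) * h j)"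
      by (rule sum.nat_diff_reindex)
    finally show ?thesis using Suc by simp
  qed
  have bnd: "cmod (fps_nth F t - of_nat t) \<le> cmod cc * (\<Sum>j. of_nat j * cmod (h j))" for t
  proof -
    have "fps_nth F t - of_nat t = cc * ((\<Sum>j<t. of_nat (t - j) * h j) - of_nat t * S)"
      using Scc unfolding Fnth by (simp add: algebra_simps)
    thus ?thesis using bound_lemma[OF s1 s2 hS, of t]
      by (simp add: norm_mult mult_left_mono)
  qed
  have fl1: "fps_of_poly [:-1,1:] = - (1 - fps_X :: complex fps)"
    by (simp add: fps_of_poly_linear fps_const_neg)
  have fl2: "fps_of_poly [:-lam k,1:] = fps_const (- lam k) * (1 - fps_const (mu k) * fps_X)" if "k \<in> K" for k
  proof -
    have "- lam k * mu k = - 1" using lam0[OF that] unfolding mu_def by simp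
    hence c1: "fps_const (- lam k) * fps_const (mu k) = - 1" by simp
    have "fps_const (- lam k) * (1 - fps_const (mu k) * fps_X) = fps_const (- lam k) - (fps_const (- lam k) * fps_const (mu k)) * fps_X"
      by (simp only: right_diff_distrib mult.assoc mult_1_right)
    hence "fps_const (- lam k) * (1 - fps_const (mu k) * fps_X) = fps_const (- lam k) + fps_X"
      by (simp only: c1) simp
    thus ?thesis by (simp add: fps_of_poly_linear fps_const_neg add.commute)
  qed
  define A where "A = (\<Prod>k\<in>K. [:-inverse (lam k),1:])"
  have "fps_of_poly ([:-1,1:]^2 * (\<Prod>k\<in>K. [:-lam k,1:] * [:-inverse (lam k),1:]))
      = (1 - fps_X)^2 * ((\<Prod>k\<in>K. fps_const (- lam k)) * (\<Prod>k\<in>K. 1 - fps_const (mu k) * fps_X) * fps_of_poly A)"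
  proof -
    have "fps_of_poly (\<Prod>k\<in>K. [:-lam k,1:] * [:-inverse (lam k),1:])
        = (\<Prod>k\<in>K. fps_const (- lam k) * (1 - fps_const (mu k) * fps_X) * fps_of_poly [:-inverse (lam k),1:])"
      unfolding fps_of_poly_prod fps_of_poly_mult by (intro prod.cong refl) (simp add: fl2)
    also have "\<dots> = (\<Prod>k\<in>K. fps_const (- lam k)) * (\<Prod>k\<in>K. 1 - fps_const (mu k) * fps_X) * fps_of_poly A"
      unfolding A_def fps_of_poly_prod by (simp add: prod.distrib)
    finally show ?thesis by (simp only: fps_of_poly_mult fps_of_poly_power fl1 power2_minus)
  qed
  also have "\<dots> * F = ((1 - fps_X)^2 * G) * ((\<Prod>k\<in>K. 1 - fps_const (mu k) * fps_X) * K0)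
       * (fps_const (\<Prod>k\<in>K. - lam k) * fps_const cc * fps_X * fps_of_poly A)"
    unfolding F_def by (simp only: fps_const_prod_eq mult_ac)
  also have "(\<Prod>k\<in>K. 1 - fps_const (mu k) * fps_X) * K0 = 1"
    unfolding K0_def prod.distrib[symmetric] by (simp add: geom_inv)
  also have "(1 - fps_X)^2 * G = 1" unfolding G_def by (rule G_inv)
  also have "fps_const (\<Prod>k\<in>K. - lam k) * fps_const cc = fps_const (\<Prod>k\<in>K. 1 - lam k)"
  proof -
    have "(\<Prod>k\<in>K. - lam k) * cc = (\<Prod>k\<in>K. - lam k * (1 - mu k))"
      unfolding cc_def by (simp only: prod.distrib[symmetric])
    also have "\<dots> = (\<Prod>k\<in>K. 1 - lam k)"
      by (intro prod.cong refl) (simp add: mu_def algebra_simps lam0)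
    finally show ?thesis by simp
  qed
  finally have eq: "fps_of_poly ([:-1,1:]^2 * (\<Prod>k\<in>K. [:-lam k,1:] * [:-inverse (lam k),1:])) * F
       = fps_const (\<Prod>k\<in>K. 1 - lam k) * fps_X * fps_of_poly A"
    by (simp add: mult.assoc)
  show ?thesis using F0 bnd eq unfolding A_def by blast
qed

lemma poly_eq_nz:
  fixes a b :: "complex poly"
  assumes "\<And>z. z \<noteq> 0 \<Longrightarrow> poly a z = poly b z"
  shows "a = b"
proof (rule ccontr)
  assume "a \<noteq> b"
  hence "a - b \<noteq> 0" by simp
  hence fin: "finite {z. poly (a - b) z = 0}" by (rule poly_roots_finite)
  have "UNIV - {0} \<subseteq> {z. poly (a - b) z = 0}" using assms by auto
  hence "finite (UNIV - {0::complex})" using fin by (rule finite_subset)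
  thus False by (simp add: infinite_UNIV_char_0)
qed

definition fcF :: "complex fps \<Rightarrow> int \<Rightarrow> complex" where
  "fcF F t = (if t < 0 then 0 else fps_nth F (nat t))"

lemma monom_F_nth:
  assumes "t \<ge> 0"
  shows "fps_nth (fps_of_poly (monom c j) * F) (nat (t + int n)) = c * fcF F (t + int n - int j)"
proof -
  have "fps_nth (fps_of_poly (monom c j) * F) (nat (t + int n)) = c * fps_nth (fps_X ^ j * F) (nat (t + int n))"
    by (simp add: fps_of_poly_monom mult.assoc)
  also have "fps_nth (fps_X ^ j * F) (nat (t + int n)) = fcF F (t + int n - int j)"
    unfolding fps_X_power_mult_nth fcF_def using assms by (auto simp: nat_diff_distrib)
  finally show ?thesis .
qed

lemma Pp_F_nth:
  fixes p :: "int ^ 'd"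
  assumes hle: "\<forall>k. \<bar>p $ k\<bar> \<le> int n" and t: "t \<ge> 0"
  shows "fps_nth (fps_of_poly (Pp p n) * F) (nat (t + int n)) = (\<Sum>k\<in>UNIV. fcF F (t + p $ k) + fcF F (t - p $ k) - 2 * fcF F t)"
proof -
  have "fps_nth (fps_of_poly (Pp p n) * F) (nat (t + int n))
     = (\<Sum>k\<in>UNIV. fps_nth (fps_of_poly (monom 1 (n + nat \<bar>p $ k\<bar>)) * F) (nat (t + int n))
        + fps_nth (fps_of_poly (monom 1 (n - nat \<bar>p $ k\<bar>)) * F) (nat (t + int n))
        - fps_nth (fps_of_poly (monom 2 n) * F) (nat (t + int n)))"
    unfolding Pp_def fps_of_poly_sum sum_distrib_right fps_sum_nth
    by (simp add: fps_of_poly_add fps_of_poly_diff algebra_simps)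
  also have "\<dots> = (\<Sum>k\<in>UNIV. fcF F (t + p $ k) + fcF F (t - p $ k) - 2 * fcF F t)"
  proof (intro sum.cong refl)
    fix k
    have a: "\<bar>p $ k\<bar> \<le> int n" using hle by simp
    have e1: "t + int n - int (n + nat \<bar>p $ k\<bar>) = t - \<bar>p $ k\<bar>" by simp
    have e2: "t + int n - int (n - nat \<bar>p $ k\<bar>) = t + \<bar>p $ k\<bar>" using a by (simp add: of_nat_diff)
    have e3: "fcF F (t - \<bar>p $ k\<bar>) + fcF F (t + \<bar>p $ k\<bar>) = fcF F (t + p $ k) + fcF F (t - p $ k)"
      by (cases "p $ k \<ge> 0") auto
    show "fps_nth (fps_of_poly (monom 1 (n + nat \<bar>p $ k\<bar>)) * F) (nat (t + int n))
        + fps_nth (fps_of_poly (monom 1 (n - nat \<bar>p $ k\<bar>)) * F) (nat (t + int n))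
        - fps_nth (fps_of_poly (monom 2 n) * F) (nat (t + int n))
        = fcF F (t + p $ k) + fcF F (t - p $ k) - 2 * fcF F t"
      unfolding monom_F_nth[OF t] e1 e2 using e3 by simp
  qed
  finally show ?thesis .
qed

lemma partB:
  fixes p :: "int ^ 'd" and lam :: "nat \<Rightarrow> complex"
  assumes i0: "p $ i0 \<noteq> 0" and hle: "\<forall>k. \<bar>p $ k\<bar> \<le> int n" and n1: "n \<ge> 1"
  and Q: "\<forall>z. z \<noteq> 0 \<longrightarrow> Qpoly p z = of_nat m * z powi (- int n) * (\<Prod>k\<in>{1..n}. (z - lam k) * (z - inverse (lam k)))"
  and l1: "lam 1 = 1" and big: "\<forall>k\<in>{2..n}. 1 < cmod (lam k)"
  shows "complex_of_real ((Hfun p)\<^sup>2) = of_int (\<Sum>k\<in>UNIV. (p $ k)\<^sup>2) * of_nat m * (\<Prod>k\<in>{2..n}. - lam k)"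
proof -
  define K where "K = {2..n}"
  have finK: "finite K" unfolding K_def by simp
  have insK: "{1..n} = insert 1 K" "1 \<notin> K" unfolding K_def using n1 by auto
  have bigK: "\<And>k. k \<in> K \<Longrightarrow> 1 < cmod (lam k)" using big unfolding K_def by auto
  have lam0: "\<And>k. k \<in> K \<Longrightarrow> lam k \<noteq> 0" using bigK by force
  define Prd where "Prd = (\<Prod>k\<in>K. [:-lam k,1:] * [:-inverse (lam k),1:])"
  have PpEq: "Pp p n = smult (of_nat m) ([:-1,1:]^2 * Prd)"
  proof (rule poly_eq_nz)
    fix z :: complex assume z: "z \<noteq> 0"
    have "z powi (- int n) * poly (Pp p n) z = z powi (- int n) * (of_nat m * (\<Prod>k\<in>{1..n}. (z - lam k) * (z - inverse (lam k))))"
      using Q z Qpoly_Pp[OF hle z] by simp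
    hence "poly (Pp p n) z = of_nat m * (\<Prod>k\<in>{1..n}. (z - lam k) * (z - inverse (lam k)))"
      using z by simp
    also have "(\<Prod>k\<in>{1..n}. (z - lam k) * (z - inverse (lam k))) = (z - 1)^2 * (\<Prod>k\<in>K. (z - lam k) * (z - inverse (lam k)))"
      unfolding insK(1) using finK insK(2) l1 by (simp add: power2_eq_square)
    also have "(\<Prod>k\<in>K. (z - lam k) * (z - inverse (lam k))) = poly Prd z"
      unfolding Prd_def poly_prod
      by (intro prod.cong refl) (simp only: poly_mult poly_pCons poly_0, simp add: algebra_simps)
    finally show "poly (Pp p n) z = poly (smult (of_nat m) ([:-1,1:]^2 * Prd)) z"
      by (simp add: poly_mult)
  qed
  have RpEq: "Rp p n = smult (of_nat m) Prd"
  proof -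
    have "[:-1,1:]^2 * Rp p n = [:-1,1:]^2 * smult (of_nat m) Prd"
      using PpEq Pp_Rp[OF hle] by simp
    moreover have "[:-1,1:]^2 \<noteq> (0 :: complex poly)" by simp
    ultimately show ?thesis using mult_left_cancel[of "[:-1,1:]^2 :: complex poly" "Rp p n" "smult (of_nat m) Prd"] by blast
  qed
  have sumsq: "of_int (\<Sum>k\<in>UNIV. (p $ k)^2) = of_nat m * (\<Prod>k\<in>K. (1 - lam k) * (1 - inverse (lam k)))"
  proof -
    have "poly Prd 1 = (\<Prod>k\<in>K. (1 - lam k) * (1 - inverse (lam k)))"
      unfolding Prd_def poly_prod
      by (intro prod.cong refl) (simp only: poly_mult poly_pCons poly_0, simp add: algebra_simps)
    thus ?thesis using Rp_at1[of p n] unfolding RpEq by simp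
  qed
  obtain F where F0: "fps_nth F 0 = 0" and FC: "\<exists>C. \<forall>t. cmod (fps_nth F t - of_nat t) \<le> C"
    and Feq: "fps_of_poly ([:-1,1:]^2 * Prd) * F
       = fps_const (\<Prod>k\<in>K. 1 - lam k) * fps_X * fps_of_poly (\<Prod>k\<in>K. [:-inverse (lam k),1:])"
    using fps_construction[of K lam, OF finK bigK] unfolding Prd_def by blast
  obtain C where C: "\<And>t. cmod (fps_nth F t - of_nat t) \<le> C" using FC by blast
  define A where "A = (\<Prod>k\<in>K. [:-inverse (lam k),1:])"
  define Hc where "Hc = of_nat m * (\<Prod>k\<in>K. 1 - lam k)"
  have PF: "fps_of_poly (Pp p n) * F = fps_const Hc * (fps_X * fps_of_poly A)"
    unfolding PpEq fps_of_poly_smult Hc_def A_def using Feq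
    by (simp add: mult.assoc)
  have degA: "degree A = n - 1"
  proof -
    have "degree A = (\<Sum>k\<in>K. degree [:-inverse (lam k),1:])"
      unfolding A_def by (rule degree_prod_sum_eq) auto
    also have "\<dots> = card K" by simp
    finally show ?thesis unfolding K_def by simp
  qed
  have leadA: "lead_coeff A = 1" unfolding A_def by (simp add: lead_coeff_prod)
  have rec: "(\<Sum>k\<in>UNIV. fcF F (t + p $ k) + fcF F (t - p $ k) - 2 * fcF F t) = (if t = 0 then Hc else 0)"
    if t: "t \<ge> 0" for t
  proof -
    have "(\<Sum>k\<in>UNIV. fcF F (t + p $ k) + fcF F (t - p $ k) - 2 * fcF F t)
        = fps_nth (fps_const Hc * (fps_X * fps_of_poly A)) (nat (t + int n))"
      using Pp_F_nth[OF hle t, of F] PF by simp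
    also have "\<dots> = Hc * coeff A (nat (t + int n) - 1)"
      using t n1 by (simp add: fps_X_mult_nth)
    also have "coeff A (nat (t + int n) - 1) = (if t = 0 then 1 else 0)"
    proof (cases "t = 0")
      case True thus ?thesis using leadA degA by simp
    next
      case False
      hence "nat (t + int n) - 1 > degree A" using t degA n1 by auto
      thus ?thesis using False by (simp add: coeff_eq_0)
    qed
    finally show ?thesis by simp
  qed
  have fc_neg: "fcF F s = 0" if "s \<le> 0" for s
    using that F0 unfolding fcF_def by auto
  have C0: "C \<ge> 0" using C[of 0] norm_ge_zero order_trans by blast
  have fcC: "cmod (fcF F s - of_int s) \<le> C" if "s > 0" for s
    using C[of "nat s"] that unfolding fcF_def by simp
  have imz: "Im (fcF F s) = 0" for s
  proof -
    have bndI: "\<bar>Im (fcF F s)\<bar> \<le> C" for s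
    proof (cases "s > 0")
      case True
      have "\<bar>Im (fcF F s)\<bar> = \<bar>Im (fcF F s - of_int s)\<bar>" by simp
      also have "\<dots> \<le> cmod (fcF F s - of_int s)" by (rule abs_Im_le_cmod)
      finally show ?thesis using fcC[OF True] by linarith
    next
      case False thus ?thesis using fc_neg C0 by simp
    qed
    have harmI: "(\<Sum>i\<in>UNIV. Im (fcF F (s + p $ i)) + Im (fcF F (s - p $ i))) = 2 * real CARD('d) * Im (fcF F s)"
      if "s > 0" for s
    proof -
      have "Im (\<Sum>k\<in>UNIV. fcF F (s + p $ k) + fcF F (s - p $ k) - 2 * fcF F s) = 0"
        using rec[of s] that by simp
      thus ?thesis by (simp add: Im_sum sum_subtractf)
    qed
    have "Im (fcF F s) \<le> 0"
      by (rule liou1[of "\<lambda>i. p $ i" i0 "\<lambda>s. Im (fcF F s)" C])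
         (use i0 bndI fc_neg harmI in \<open>auto dest: abs_le_D1\<close>)
    moreover have "- Im (fcF F s) \<le> 0"
    proof (rule liou1[of "\<lambda>i. p $ i" i0 "\<lambda>s. - Im (fcF F s)" C])
      show "- Im (fcF F s) \<le> C" for s using bndI[of s] by linarith
      show "2 * real CARD('d) * - Im (fcF F s) \<le> (\<Sum>i\<in>UNIV. - Im (fcF F (s + p $ i)) + - Im (fcF F (s - p $ i)))"
        if "s > 0" for s unfolding minus_add_distrib[symmetric] sum_negf using harmI[OF that] by simp
    qed (use i0 fc_neg in auto)
    ultimately show ?thesis by simp
  qed
  define u where "u x = Re (fcF F (ldot p x))" for x
  have Psu: "Psol p u" unfolding Psol_def
  proof (intro conjI allI impI)
    fix x assume x: "ldot p x > 0"
    have "dlap u x = (\<Sum>i\<in>UNIV. Re (fcF F (ldot p x + p $ i) + fcF F (ldot p x - p $ i) - 2 * fcF F (ldot p x)))"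
      unfolding dlap_def u_def ldot_axis by simp
    also have "\<dots> = Re (\<Sum>i\<in>UNIV. fcF F (ldot p x + p $ i) + fcF F (ldot p x - p $ i) - 2 * fcF F (ldot p x))"
      by (simp add: Re_sum)
    also have "\<dots> = 0" using rec[of "ldot p x"] x by simp
    finally show "dlap u x = 0" .
  next
    fix x assume "ldot p x \<le> 0" thus "u x = 0" unfolding u_def using fc_neg by simp
  next
    show "\<exists>C. \<forall>x. 0 < ldot p x \<longrightarrow> \<bar>u x - real_of_int (ldot p x)\<bar> \<le> C"
    proof (intro exI allI impI)
      fix x assume x: "ldot p x > 0"
      have "\<bar>u x - real_of_int (ldot p x)\<bar> = \<bar>Re (fcF F (ldot p x) - of_int (ldot p x))\<bar>"
        unfolding u_def by simp
      also have "\<dots> \<le> cmod (fcF F (ldot p x) - of_int (ldot p x))" by (rule abs_Re_le_cmod)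
      finally show "\<bar>u x - real_of_int (ldot p x)\<bar> \<le> C" using fcC[OF x] by linarith
    qed
  qed
  have H: "Hfun p = Re Hc"
  proof -
    have "Hfun p = dlap u 0" unfolding Hfun_def using usol_eq[OF i0 Psu] by simp
    also have "\<dots> = Re (\<Sum>i\<in>UNIV. fcF F (0 + p $ i) + fcF F (0 - p $ i) - 2 * fcF F 0)"
      unfolding dlap_def u_def ldot_axis by (simp add: Re_sum)
    also have "\<dots> = Re Hc" using rec[of 0] by simp
    finally show ?thesis .
  qed
  have ImHc: "Im Hc = 0"
  proof -
    have "Hc = (\<Sum>k\<in>UNIV. fcF F (0 + p $ k) + fcF F (0 - p $ k) - 2 * fcF F 0)" using rec[of 0] by simp
    thus ?thesis by (simp add: Im_sum imz)
  qed
  have "complex_of_real ((Hfun p)\<^sup>2) = Hc^2"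
    unfolding H using ImHc by (simp add: complex_eq_iff power2_eq_square)
  also have "\<dots> = of_nat m * of_nat m * ((\<Prod>k\<in>K. 1 - lam k) * (\<Prod>k\<in>K. 1 - lam k))"
    unfolding Hc_def by (simp add: power2_eq_square algebra_simps)
  also have "(\<Prod>k\<in>K. 1 - lam k) * (\<Prod>k\<in>K. 1 - lam k) = (\<Prod>k\<in>K. (1 - lam k) * (1 - inverse (lam k))) * (\<Prod>k\<in>K. - lam k)"
  proof -
    have "(\<Prod>k\<in>K. (1 - lam k) * (1 - inverse (lam k))) * (\<Prod>k\<in>K. - lam k) = (\<Prod>k\<in>K. (1 - lam k) * (1 - inverse (lam k)) * - lam k)"
      by (simp only: prod.distrib)
    also have "\<dots> = (\<Prod>k\<in>K. (1 - lam k) * (1 - lam k))"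
      by (intro prod.cong refl) (simp add: algebra_simps lam0)
    finally show ?thesis by (simp only: prod.distrib)
  qed
  finally show ?thesis unfolding sumsq K_def by (simp add: algebra_simps)
qed

lemma powi_Gcd:
  fixes z :: complex
  assumes z: "z \<noteq> 0" and fin: "finite A" and h: "\<forall>a\<in>A. z powi a = 1"
  shows "z powi (Gcd A) = 1"
  using fin h
proof (induction A rule: finite_induct)
  case empty thus ?case by simp
next
  case (insert a A)
  define g where "g = Gcd A"
  have za: "z powi a = 1" and zg: "z powi g = 1" using insert unfolding g_def by auto
  define u where "u = fst (bezout_coefficients a g)"
  define v where "v = snd (bezout_coefficients a g)"
  have uv: "u * a + v * g = gcd a g" unfolding u_def v_def by (rule bezout_coefficients_fst_snd)
  have "z powi (u * a + v * g) = z powi (a * u) * z powi (g * v)"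
    using z by (simp add: power_int_add mult.commute)
  also have "\<dots> = 1" by (simp add: power_int_mult za zg)
  finally show ?case unfolding Gcd_insert g_def[symmetric] uv[symmetric] .
qed

lemma unit_root:
  fixes p :: "int ^ 'd" and z :: complex
  assumes g: "Gcd (range (\<lambda>k. p $ k)) = 1" and z: "cmod z = 1" and Q: "Qpoly p z = 0"
  shows "z = 1"
proof -
  have z0: "z \<noteq> 0" using z by auto
  define w where "w k = z powi (p $ k)" for k
  have nw: "cmod (w k) = 1" for k unfolding w_def by (simp add: norm_power_int z)
  have Rew: "Re (w k + z powi (- p $ k) - 2) = 2 * Re (w k) - 2" for k
  proof -
    have "z powi (- p $ k) = inverse (w k)" unfolding w_def by (simp add: power_int_minus)
    moreover have "(Re (w k))\<^sup>2 + (Im (w k))\<^sup>2 = 1" using nw[of k] cmod_power2[of "w k"] by simp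
    ultimately show ?thesis by simp
  qed
  have Rle: "Re (w k) \<le> 1" for k using complex_Re_le_cmod[of "w k"] nw[of k] by simp
  have "0 = Re (Qpoly p z)" using Q by simp
  also have "\<dots> = (\<Sum>k\<in>UNIV. 2 * Re (w k) - 2)" unfolding Qpoly_def Re_sum w_def[symmetric] Rew ..
  finally have "(\<Sum>k\<in>UNIV. 2 - 2 * Re (w k)) = 0" by (simp add: sum_subtractf)
  moreover have "\<forall>k\<in>UNIV. 0 \<le> 2 - 2 * Re (w k)" using Rle by (simp add: algebra_simps)
  ultimately have "\<forall>k\<in>UNIV. 2 - 2 * Re (w k) = 0"
    using sum_nonneg_eq_0_iff[of UNIV "\<lambda>k. 2 - 2 * Re (w k)"] by simp
  hence Re1: "Re (w k) = 1" for k by simp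
  have w1: "w k = 1" for k
  proof -
    have "(Re (w k))\<^sup>2 + (Im (w k))\<^sup>2 = 1" using nw[of k] cmod_power2[of "w k"] by simp
    hence "Im (w k) = 0" using Re1[of k] by simp
    thus ?thesis using Re1[of k] by (simp add: complex_eq_iff)
  qed
  have "z powi (Gcd (range (\<lambda>k. p $ k))) = 1"
    by (rule powi_Gcd[OF z0]) (use w1 in \<open>auto simp: w_def\<close>)
  thus ?thesis using g by simp
qed

lemma Rp_pos:
  fixes p :: "int ^ 'd"
  assumes i0: "p $ i0 \<noteq> 0" and r: "r > 0"
  shows "poly (Rp p n) (of_real r) \<noteq> 0"
proof -
  define f where "f k = r ^ (n - nat \<bar>p $ k\<bar>) * (\<Sum>i<nat \<bar>p $ k\<bar>. r ^ i)^2" for k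
  have "poly (Rp p n) (of_real r) = of_real (\<Sum>k\<in>UNIV. f k)"
    unfolding Rp_def f_def by (simp add: poly_sum poly_monom poly_Gs)
  moreover have "(\<Sum>k\<in>UNIV. f k) > 0"
  proof (rule sum_pos2)
    show "0 \<le> f k" for k unfolding f_def using r by (intro mult_nonneg_nonneg sum_nonneg) auto
    have "(\<Sum>i<nat \<bar>p $ i0\<bar>. r ^ i) > 0"
      using i0 r by (intro sum_pos2[of _ 0]) auto
    thus "0 < f i0" unfolding f_def using r by simp
  qed auto
  ultimately show ?thesis by (metis of_real_eq_0_iff less_irrefl)
qed

lemma coeff_Pp:
  "coeff (Pp p n) i = (\<Sum>k\<in>UNIV. (if n + nat \<bar>p $ k\<bar> = i then 1 else 0) + (if n - nat \<bar>p $ k\<bar> = i then 1 else 0) - (if n = i then 2 else 0))"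
  unfolding Pp_def by (simp add: coeff_sum coeff_monom)

lemma sum_indicator_card: "(\<Sum>k\<in>(UNIV :: 'a :: finite set). if P k then 1 else 0) = (of_nat (card {k. P k}) :: 'b :: semiring_1)"
proof -
  have "(sum (\<lambda>_. 1) {k \<in> UNIV. P k} :: 'b) = (\<Sum>k\<in>(UNIV :: 'a set). if P k then 1 else 0)"
    by (rule sum.inter_filter) simp
  moreover have "{k \<in> UNIV. P k} = {k. P k}" by simp
  ultimately show ?thesis by simp
qed

lemma pal_term:
  fixes a n i :: nat
  assumes "a \<le> n" "i \<le> 2 * n"
  shows "(if n + a = 2*n - i then 1 else 0) + (if n - a = 2*n - i then 1 else 0) - (if n = 2*n - i then 2 else 0)
       = (if n + a = i then 1 else 0) + (if n - a = i then 1 else 0) - (if n = i then 2 else (0::complex))"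
proof -
  have "(n + a = 2*n - i) = (n - a = i)" "(n - a = 2*n - i) = (n + a = i)" "(n = 2*n-i) = (n = i)"
    using assms by arith+
  thus ?thesis by simp
qed

lemma Pp_props:
  fixes p :: "int ^ 'd"
  assumes hle: "\<forall>k. \<bar>p $ k\<bar> \<le> int n" and n1: "n \<ge> 1" and mpos: "card {k. \<bar>p $ k\<bar> = int n} > 0"
  shows "degree (Pp p n) = 2 * n" "lead_coeff (Pp p n) = of_nat (card {k. \<bar>p $ k\<bar> = int n})"
    "reflect_poly (Pp p n) = Pp p n" "coeff (Pp p n) 0 = of_nat (card {k. \<bar>p $ k\<bar> = int n})"
proof -
  have ak: "nat \<bar>p $ k\<bar> \<le> n" for k using hle by (simp add: nat_le_iff)
  have big0: "coeff (Pp p n) i = 0" if "i > 2 * n" for i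
    unfolding coeff_Pp using ak that by (intro sum.neutral) (auto, (metis less_le_not_le)+)
  have top: "coeff (Pp p n) (2 * n) = of_nat (card {k. \<bar>p $ k\<bar> = int n})"
  proof -
    have "coeff (Pp p n) (2 * n) = (\<Sum>k\<in>UNIV. if nat \<bar>p $ k\<bar> = n then 1 else 0)"
      unfolding coeff_Pp using n1 by (intro sum.cong refl) auto
    also have "\<dots> = of_nat (card {k. nat \<bar>p $ k\<bar> = n})" by (rule sum_indicator_card)
    also have "{k. nat \<bar>p $ k\<bar> = n} = {k. \<bar>p $ k\<bar> = int n}" by auto
    finally show ?thesis .
  qed
  have pal: "coeff (Pp p n) (2 * n - i) = coeff (Pp p n) i" if "i \<le> 2 * n" for i
    unfolding coeff_Pp using ak that by (intro sum.cong refl pal_term)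
  have deg: "degree (Pp p n) = 2 * n"
  proof (rule antisym)
    show "degree (Pp p n) \<le> 2 * n" using big0 by (intro degree_le) auto
    have "complex_of_nat (card {k. \<bar>p $ k\<bar> = int n}) \<noteq> 0" using mpos by (simp only: of_nat_eq_0_iff)
    thus "2 * n \<le> degree (Pp p n)" using top by (intro le_degree) simp
  qed
  thus "degree (Pp p n) = 2 * n" .
  show "lead_coeff (Pp p n) = of_nat (card {k. \<bar>p $ k\<bar> = int n})" using deg top by simp
  show "reflect_poly (Pp p n) = Pp p n"
  proof (rule poly_eqI)
    fix i show "coeff (reflect_poly (Pp p n)) i = coeff (Pp p n) i"
      unfolding coeff_reflect_poly deg using big0 pal by auto
  qed
  show "coeff (Pp p n) 0 = of_nat (card {k. \<bar>p $ k\<bar> = int n})"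
    using pal[of "2 * n"] top by simp
qed

lemma prod_list_smult:
  "prod_list (map (\<lambda>x. smult (c x) (q x)) ys) = smult (prod_list (map c ys)) (prod_list (map q ys))"
  by (induction ys) (simp_all add: mult_smult_left mult_smult_right mult.commute)

lemma sum_list_single: "sum_list (map (\<lambda>x. {#f x#}) ys) = mset (map f ys)"
  by (induction ys) auto

lemma reflect_lin:
  fixes x :: complex
  assumes "x \<noteq> 0"
  shows "reflect_poly [:-x, 1:] = smult (-x) [:-inverse x, 1:]"
proof -
  have "reflect_poly [:-x, 1:] = [:1, -x:]"
    using assms by (simp add: reflect_poly_pCons)
  also have "\<dots> = smult (-x) [:-inverse x, 1:]" using assms by simp
  finally show ?thesis .
qed

lemma Rp_struct:
  fixes p :: "int ^ 'd"
  assumes g: "Gcd (range (\<lambda>k. p $ k)) = 1" and i0: "p $ i0 \<noteq> 0"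
    and hle: "\<forall>k. \<bar>p $ k\<bar> \<le> int n" and n1: "n \<ge> 1"
    and mdef: "m = card {k. \<bar>p $ k\<bar> = int n}" and mpos: "m > 0"
  shows "\<exists>B. size B = n - 1 \<and> (\<forall>x\<in>#B. 1 < cmod x \<and> poly (Rp p n) x = 0)
           \<and> Rp p n = smult (of_nat m) (\<Prod>x\<in>#B. [:-x,1:] * [:-inverse x,1:])"
proof -
  define R where "R = Rp p n"
  define X1 where "X1 = ([:-1,1:] :: complex poly)"
  have PR: "Pp p n = X1^2 * R" unfolding R_def X1_def by (rule Pp_Rp[OF hle])
  note PP = Pp_props[OF hle n1 mpos[unfolded mdef], folded mdef]
  have R1: "poly R 1 \<noteq> 0"
  proof -
    have "(\<Sum>k\<in>UNIV. (p $ k)^2) > 0"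
      using i0 by (intro sum_pos2[of _ i0]) auto
    thus ?thesis unfolding R_def Rp_at1 by (metis of_int_eq_0_iff less_irrefl)
  qed
  have R0: "R \<noteq> 0" using R1 by auto
  have X10: "X1^2 \<noteq> 0" unfolding X1_def by simp
  have degR: "degree R = 2 * n - 2"
  proof -
    have "degree (Pp p n) = degree (X1^2) + degree R" unfolding PR using X10 R0 by (rule degree_mult_eq)
    moreover have "degree (X1^2) = 2" unfolding X1_def by (simp add: degree_power_eq)
    ultimately show ?thesis using PP(1) by simp
  qed
  have leadR: "lead_coeff R = of_nat m"
  proof -
    have "lead_coeff (Pp p n) = lead_coeff (X1^2) * lead_coeff R" unfolding PR by (rule lead_coeff_mult)
    moreover have "lead_coeff (X1^2) = 1" unfolding X1_def by (simp add: lead_coeff_power)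
    ultimately show ?thesis using PP(2) by simp
  qed
  have reflR: "reflect_poly R = R"
  proof -
    have "reflect_poly X1 = - X1" unfolding X1_def by (simp add: reflect_poly_pCons)
    hence "reflect_poly (X1^2) = X1^2" by (simp add: reflect_poly_power)
    hence "X1^2 * reflect_poly R = X1^2 * R" using PP(3) unfolding PR reflect_poly_mult by simp
    thus ?thesis using X10 mult_left_cancel by blast
  qed
  have Rat0: "poly R 0 \<noteq> 0"
  proof -
    have "poly (Pp p n) 0 = poly R 0" unfolding PR X1_def by simp
    moreover have "poly (Pp p n) 0 = of_nat m" using PP(4) by (simp add: poly_0_coeff_0)
    ultimately show ?thesis using mpos by (metis of_nat_eq_0_iff less_irrefl)
  qed
  obtain ys where ys: "mset ys = proots R" using ex_mset by blast
  define f where "f x = [:-x, 1:]" for x :: complex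
  have Rdec: "R = smult (of_nat m) (prod_list (map f ys))"
  proof -
    have "R = smult (lead_coeff R) (\<Prod>x\<in>#proots R. [:-x, 1:])" by (rule complex_poly_decompose_multiset[symmetric])
    also have "(\<Prod>x\<in>#proots R. [:-x, 1:]) = prod_list (map f ys)"
      unfolding ys[symmetric] f_def by (simp add: prod_mset_prod_list[symmetric])
    finally show ?thesis using leadR by simp
  qed
  have ys0: "x \<noteq> 0" if "x \<in> set ys" for x
  proof -
    have "x \<in># proots R" using that ys by (metis set_mset_mset)
    hence "poly R x = 0" using R0 by simp
    thus ?thesis using Rat0 by auto
  qed
  have yroot: "poly R x = 0" if "x \<in># mset ys" for x using that ys R0 by simp
  have inv: "image_mset inverse (mset ys) = mset ys"
  proof -
    have "R = reflect_poly R" using reflR by simp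
    also have "\<dots> = smult (of_nat m) (prod_list (map (\<lambda>x. smult (-x) [:-inverse x, 1:]) ys))"
      unfolding Rdec reflect_poly_smult reflect_poly_prod_list map_map o_def f_def
      using ys0 by (simp add: reflect_lin cong: map_cong)
    also have "\<dots> = smult (of_nat m * prod_list (map uminus ys)) (prod_list (map (\<lambda>x. [:-inverse x, 1:]) ys))"
      by (simp only: prod_list_smult smult_smult)
    finally have E: "R = smult (of_nat m * prod_list (map uminus ys)) (prod_list (map (\<lambda>x. [:-inverse x, 1:]) ys))" .
    have c0: "of_nat m * prod_list (map uminus ys) \<noteq> (0::complex)"
      using mpos ys0 by (auto simp: prod_list_zero_iff)
    have "proots R = proots (prod_list (map (\<lambda>x. [:-inverse x, 1:]) ys))"
      by (subst E) (rule proots_smult[OF c0])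
    also have "\<dots> = sum_list (map proots (map (\<lambda>x. [:-inverse x, 1:]) ys))"
    proof -
      have "(0::complex poly) \<notin> set (map (\<lambda>x. [:-inverse x,1:]) ys)" by auto
      from proots_prod_list[OF this] show ?thesis by simp
    qed
    also have "\<dots> = sum_list (map (\<lambda>x. {#inverse x#}) ys)"
      by (simp add: map_map o_def)
    also have "\<dots> = mset (map inverse ys)" by (rule sum_list_single)
    finally show ?thesis using ys by simp
  qed
  define Rt where "Rt = mset ys"
  have Rt0: "x \<noteq> 0" if "x \<in># Rt" for x using ys0 that unfolding Rt_def by simp
  have unit: "cmod x \<noteq> 1" if "x \<in># Rt" for x
  proof
    assume x1: "cmod x = 1"
    hence x0: "x \<noteq> 0" by auto
    have "poly R x = 0" using yroot that unfolding Rt_def by simp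
    hence "poly (Pp p n) x = 0" unfolding PR by simp
    hence "Qpoly p x = 0" using Qpoly_Pp[OF hle x0] by simp
    hence "x = 1" by (rule unit_root[OF g x1])
    thus False using R1 \<open>poly R x = 0\<close> by simp
  qed
  define B where "B = filter_mset (\<lambda>x. 1 < cmod x) Rt"
  have split: "Rt = B + image_mset inverse B"
  proof -
    have "Rt = B + filter_mset (\<lambda>x. \<not> 1 < cmod x) Rt" unfolding B_def by (rule multiset_partition)
    also have "filter_mset (\<lambda>x. \<not> 1 < cmod x) Rt = filter_mset (\<lambda>x. 1 < cmod (inverse x)) Rt"
    proof (rule filter_mset_cong[OF refl])
      fix x assume x: "x \<in># Rt"
      have "cmod x \<noteq> 1" "x \<noteq> 0" using unit[OF x] Rt0[OF x] by auto
      thus "(\<not> 1 < cmod x) = (1 < cmod (inverse x))"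
        by (auto simp: norm_inverse one_less_inverse_iff)
    qed
    also have "\<dots> = filter_mset (\<lambda>x. 1 < cmod (inverse x)) (image_mset inverse Rt)"
      using inv unfolding Rt_def by simp
    also have "\<dots> = image_mset inverse B"
      unfolding filter_mset_image_mset B_def by simp
    finally show ?thesis .
  qed
  have sizeB: "size B = n - 1"
  proof -
    have "size Rt = degree R" unfolding Rt_def ys by (rule size_proots_complex)
    hence "2 * n - 2 = size B + size B" using split degR by (metis size_image_mset size_union)
    thus ?thesis by simp
  qed
  have Rprod: "R = smult (of_nat m) (\<Prod>x\<in>#B. [:-x,1:] * [:-inverse x,1:])"
  proof -
    have "prod_list (map f ys) = (\<Prod>x\<in>#Rt. f x)" unfolding Rt_def by (simp add: prod_mset_prod_list[symmetric])
    also have "\<dots> = (\<Prod>x\<in>#B. f x) * (\<Prod>x\<in>#B. f (inverse x))"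
      by (subst split) (simp add: image_mset.compositionality o_def)
    also have "\<dots> = (\<Prod>x\<in>#B. [:-x,1:] * [:-inverse x,1:])"
      unfolding f_def by (simp only: prod_mset.distrib)
    finally show ?thesis using Rdec by simp
  qed
  show ?thesis
  proof (intro exI conjI ballI)
    show "size B = n - 1" by (rule sizeB)
    show "Rp p n = smult (of_nat m) (\<Prod>x\<in>#B. [:-x,1:] * [:-inverse x,1:])" using Rprod unfolding R_def .
  next
    fix x assume "x \<in># B"
    thus "1 < cmod x" "poly (Rp p n) x = 0" unfolding B_def Rt_def using yroot unfolding R_def by auto
  qed
qed

lemma partA:
  fixes p :: "int ^ 'd"
  assumes g: "Gcd (range (\<lambda>k. p $ k)) = 1" and i0: "p $ i0 \<noteq> 0"
    and hle: "\<forall>k. \<bar>p $ k\<bar> \<le> int n" and n1: "n \<ge> 1"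
    and mdef: "m = card {k. \<bar>p $ k\<bar> = int n}" and mpos: "m > 0"
  shows "\<exists>lam :: nat \<Rightarrow> complex.
      (\<forall>z. z \<noteq> 0 \<longrightarrow> Qpoly p z =
          of_nat m * z powi (- int n) * (\<Prod>k\<in>{1..n}. (z - lam k) * (z - inverse (lam k))))
    \<and> lam 1 = 1
    \<and> (\<forall>k\<in>{2..n}. 1 < cmod (lam k))
    \<and> (\<forall>k. 2 \<le> k \<and> k < n \<longrightarrow> cmod (lam k) \<le> cmod (lam (Suc k)))
    \<and> (\<forall>k\<in>{2..n}. lam k \<notin> complex_of_real ` {1..})"
proof -
  obtain B where sB: "size B = n - 1" and Bp: "\<forall>x\<in>#B. 1 < cmod x \<and> poly (Rp p n) x = 0"
    and RB: "Rp p n = smult (of_nat m) (\<Prod>x\<in>#B. [:-x,1:] * [:-inverse x,1:])"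
    using Rp_struct[OF g i0 hle n1 mdef mpos] by blast
  obtain xs0 where xs0: "mset xs0 = B" using ex_mset by blast
  define xs where "xs = sort_key cmod xs0"
  have mxs: "mset xs = B" unfolding xs_def using xs0 by simp
  have lxs: "length xs = n - 1" using sB mxs by (metis size_mset)
  have sxs: "sorted (map cmod xs)" unfolding xs_def by (rule sorted_sort_key)
  have setxs: "1 < cmod x \<and> poly (Rp p n) x = 0" if "x \<in> set xs" for x
    using Bp that mxs by (metis set_mset_mset)
  define lam where "lam k = (if k = 1 then 1 else xs ! (k - 2))" for k
  have laminxs: "lam k \<in> set xs" if "k \<in> {2..n}" for k
    using that lxs unfolding lam_def by auto
  show ?thesis
  proof (intro exI conjI allI impI ballI)
    show "lam 1 = 1" unfolding lam_def by simp
  next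
    fix k assume "k \<in> {2..n}" thus "1 < cmod (lam k)" using laminxs setxs by blast
  next
    fix k assume k: "2 \<le> k \<and> k < n"
    have "(map cmod xs) ! (k - 2) \<le> (map cmod xs) ! (k - 1)"
      using k lxs by (intro sorted_nth_mono[OF sxs]) auto
    moreover have "(map cmod xs) ! (k - 2) = cmod (xs ! (k - 2))" "(map cmod xs) ! (k - 1) = cmod (xs ! (k - 1))"
      using k lxs by auto
    ultimately show "cmod (lam k) \<le> cmod (lam (Suc k))" using k unfolding lam_def by simp
  next
    fix k assume k: "k \<in> {2..n}"
    show "lam k \<notin> complex_of_real ` {1..}"
    proof
      assume "lam k \<in> complex_of_real ` {1..}"
      then obtain r where r: "r \<ge> 1" "lam k = of_real r" by auto
      have "poly (Rp p n) (of_real r) = 0" using setxs[OF laminxs[OF k]] r by simp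
      moreover have "poly (Rp p n) (of_real r) \<noteq> 0" using r by (intro Rp_pos[OF i0]) auto
      ultimately show False by simp
    qed
  next
    fix z :: complex assume z: "z \<noteq> 0"
    define gz where "gz x = (z - x) * (z - inverse x)" for x
    have "(\<Prod>x\<in>#B. gz x) = prod_list (map gz xs)"
      unfolding mxs[symmetric] by (simp add: prod_mset_prod_list[symmetric])
    also have "\<dots> = (\<Prod>i\<in>{0..<n - 1}. gz (xs ! i))"
      by (simp add: prod.list_conv_set_nth lxs)
    also have "\<dots> = (\<Prod>i\<in>{0..<n - 1}. gz (lam (i + 2)))"
      unfolding lam_def by simp
    also have "\<dots> = (\<Prod>k\<in>{0 + 2..<n - 1 + 2}. gz (lam k))"
      by (rule prod.shift_bounds_nat_ivl[symmetric])
    also have "{0 + 2..<n - 1 + 2} = {2..n}" using n1 by auto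
    finally have PB: "(\<Prod>x\<in>#B. gz x) = (\<Prod>k\<in>{2..n}. gz (lam k))" .
    have "(\<Prod>k\<in>{1..n}. gz (lam k)) = gz (lam 1) * (\<Prod>k\<in>{2..n}. gz (lam k))"
    proof -
      have "{1..n} = insert 1 {2..n}" using n1 by auto
      thus ?thesis by simp
    qed
    also have "gz (lam 1) = (z - 1)^2" unfolding gz_def lam_def by (simp add: power2_eq_square)
    finally have P1: "(\<Prod>k\<in>{1..n}. gz (lam k)) = (z - 1)^2 * (\<Prod>x\<in>#B. gz x)" using PB by simp
    have polyRB: "poly (Rp p n) z = of_nat m * (\<Prod>x\<in>#B. gz x)"
    proof -
      have pg: "poly ([:-x,1:] * [:-inverse x,1:]) z = gz x" for x
        unfolding gz_def by (simp only: poly_mult poly_pCons poly_0, simp add: algebra_simps)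
      have "poly (\<Prod>x\<in>#B. [:-x,1:] * [:-inverse x,1:]) z = (\<Prod>x\<in>#B. gz x)"
        unfolding poly_prod_mset pg ..
      thus ?thesis unfolding RB by simp
    qed
    have "Qpoly p z = z powi (- int n) * poly (Pp p n) z" by (rule Qpoly_Pp[OF hle z])
    also have "poly (Pp p n) z = (z - 1)^2 * poly (Rp p n) z" unfolding Pp_Rp[OF hle] by (simp add: power2_eq_square algebra_simps)
    finally show "Qpoly p z = of_nat m * z powi (- int n) * (\<Prod>k\<in>{1..n}. (z - lam k) * (z - inverse (lam k)))"
      using P1 polyRB unfolding gz_def by (simp add: algebra_simps)
  qed
qed

theorem mainTheorem7:
  fixes p :: "int ^ 'd"
  assumes "Gcd (range (\<lambda>k. p $ k)) = 1"
  defines "n \<equiv> nat (Max (range (\<lambda>k. \<bar>p $ k\<bar>)))"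
  defines "m \<equiv> card {k. \<bar>p $ k\<bar> = int n}"
  defines "roots \<equiv> \<lambda>lam :: nat \<Rightarrow> complex.
      (\<forall>z. z \<noteq> 0 \<longrightarrow> Qpoly p z =
          of_nat m * z powi (- int n) * (\<Prod>k\<in>{1..n}. (z - lam k) * (z - inverse (lam k))))
    \<and> lam 1 = 1
    \<and> (\<forall>k\<in>{2..n}. 1 < cmod (lam k))
    \<and> (\<forall>k. 2 \<le> k \<and> k < n \<longrightarrow> cmod (lam k) \<le> cmod (lam (Suc k)))
    \<and> (\<forall>k\<in>{2..n}. lam k \<notin> complex_of_real ` {1..})"
  shows "(\<exists>lam. roots lam) \<and>
         (\<forall>lam. roots lam \<longrightarrow>
            complex_of_real ((Hfun p)\<^sup>2) =
              of_int (\<Sum>k\<in>UNIV. (p $ k)\<^sup>2) * of_nat m * (\<Prod>k\<in>{2..n}. - lam k))"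
proof -
  note g = assms(1)
  obtain i0 where i0: "p $ i0 \<noteq> 0"
  proof (rule ccontr)
    assume "\<not> thesis"
    hence "\<forall>i. p $ i = 0" using that by blast
    hence "range (\<lambda>k. p $ k) = {0}" by auto
    thus False using g by simp
  qed
  define M where "M = Max (range (\<lambda>k. \<bar>p $ k\<bar>))"
  have Mge: "\<bar>p $ k\<bar> \<le> M" for k unfolding M_def by (rule Max_ge) auto
  have Min: "M \<in> range (\<lambda>k. \<bar>p $ k\<bar>)" unfolding M_def by (rule Max_in) auto
  have M0: "M \<ge> 0" using Mge[of i0] by simp
  have nM: "int n = M" unfolding n_def M_def[symmetric] using M0 by simp
  have hle: "\<forall>k. \<bar>p $ k\<bar> \<le> int n" using Mge nM by simp
  have n1: "n \<ge> 1" using Mge[of i0] i0 nM by simp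
  have mpos: "m > 0"
  proof -
    obtain k where "\<bar>p $ k\<bar> = int n" using Min nM by auto
    hence "{k. \<bar>p $ k\<bar> = int n} \<noteq> {}" by auto
    thus ?thesis unfolding m_def by (simp add: card_gt_0_iff)
  qed
  show ?thesis
  proof (intro conjI allI impI)
    show "\<exists>lam. roots lam" unfolding roots_def
      by (rule partA[OF g i0 hle n1 meta_eq_to_obj_eq[OF m_def] mpos])
  next
    fix lam assume "roots lam"
    hence r: "\<forall>z. z \<noteq> 0 \<longrightarrow> Qpoly p z = of_nat m * z powi (- int n) * (\<Prod>k\<in>{1..n}. (z - lam k) * (z - inverse (lam k)))"
      "lam 1 = 1" "\<forall>k\<in>{2..n}. 1 < cmod (lam k)" unfolding roots_def by auto
    show "complex_of_real ((Hfun p)\<^sup>2) = of_int (\<Sum>k\<in>UNIV. (p $ k)\<^sup>2) * of_nat m * (\<Prod>k\<in>{2..n}. - lam k)"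
      by (rule partB[OF i0 hle n1 r])
  qed
qed

end
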